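(* Let $u$ be a coherent utility on $L^0$ with determining set $\mathcal{D}$, let $Y$ be a random variable or random vector, and let $X,W\in L^1_s(\mathcal{D})\cap L^1_s(\mathsf{E}(\mathcal{D}\mid Y))\cap L^1$. Then $$u^{fc}(X;Y;W)=u^c\big(\mathsf{E}(X\mid Y);\mathsf{E}(W\mid Y)\big).$$
   Context: Let $(\Omega,\mathcal{F},\mathsf{P})$ be a probability space, $L^0$ the space of all real random variables, $L^1=L^1(\mathsf{P})$, and $\mathcal{P}$ the set of probability measures on $\mathcal{F}$ absolutely continuous with respect to $\mathsf{P}$; measures are identified with their densities. For $\mathsf{Q}\in\mathcal{P}$, $\mathsf{E}_\mathsf{Q}X:=\mathsf{E}_\mathsf{Q}X^+-\mathsf{E}_\mathsf{Q}X^-$ with the convention $\infty-\infty=-\infty$. A coherent utility on $L^0$ is a map $u:L^0\to[-\infty,\infty]$ of the form $u(X)=\inf_{\mathsf{Q}\in\mathcal{D}}\mathsf{E}_\mathsf{Q}X$ for a nonempty $\mathcal{D}\subseteq\mathcal{P}$; its determining set is the largest such set, $\{\mathsf{Q}\in\mathcal{P}:\mathsf{E}_\mathsf{Q}X\ge u(X)\ \forall X\in L^0\}$. For $\mathcal{C}\subseteq\mathcal{P}$, $L^1_s(\mathcal{C})=\{X\in L^0:\lim_{n\to\infty}\sup_{\mathsf{Q}\in\mathcal{C}}\mathsf{E}_\mathsf{Q}|X|I(|X|>n)=0\}$. For a random vector $Y$, $\mathsf{E}(\mathcal{D}\mid Y):=\{\mathsf{E}(Z\mid Y):Z\in\mathcal{D}\}$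 and $u^f(X;Y):=\inf_{\mathsf{Q}\in\mathsf{E}(\mathcal{D}\mid Y)}\mathsf{E}_\mathsf{Q}X$. Extreme measures: $\mathcal{X}_\mathcal{D}(W)=\{\mathsf{Q}\in\mathcal{D}:\mathsf{E}_\mathsf{Q}W=u(W)\in(-\infty,\infty)\}$ and $\mathcal{X}_{\mathsf{E}(\mathcal{D}\mid Y)}(W)=\{\mathsf{Q}\in\mathsf{E}(\mathcal{D}\mid Y):\mathsf{E}_\mathsf{Q}W=u^f(W;Y)\in(-\infty,\infty)\}$. Utility contribution: $u^c(X;W)=\inf_{\mathsf{Q}\in\mathcal{X}_\mathcal{D}(W)}\mathsf{E}_\mathsf{Q}X$; factor utility contribution: $u^{fc}(X;Y;W)=\inf_{\mathsf{Q}\in\mathcal{X}_{\mathsf{E}(\mathcal{D}\mid Y)}(W)}\mathsf{E}_\mathsf{Q}X$. *)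

theory Defs
  imports "HOL-Probability.Probability"
begin

text \<open>Probability measures absolutely continuous w.r.t. P, identified with densities.\<close>
definition dens :: "'a measure \<Rightarrow> ('a \<Rightarrow> real) set" where
  "dens M = {Z \<in> borel_measurable M. (AE x in M. 0 \<le> Z x) \<and> integrable M Z \<and> integral\<^sup>L M Z = 1}"

text \<open>E_Q X = E_Q X^+ - E_Q X^-, with the convention infinity - infinity = -infinity.\<close>
definition EQ :: "'a measure \<Rightarrow> ('a \<Rightarrow> real) \<Rightarrow> ('a \<Rightarrow> real) \<Rightarrow> ereal" where
  "EQ M Z X =
    (let p = (\<integral>\<^sup>+ x. ennreal (Z x * max (X x) 0) \<partial>M);
         n = (\<integral>\<^sup>+ x. ennreal (Z x * max (- X x) 0) \<partial>M)
     in if n = \<infinity> then -\<infinity> else enn2ereal p - enn2ereal n)"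

definition coherent_utility :: "'a measure \<Rightarrow> (('a \<Rightarrow> real) \<Rightarrow> ereal) \<Rightarrow> bool" where
  "coherent_utility M u \<longleftrightarrow>
    (\<exists>D. D \<noteq> {} \<and> D \<subseteq> dens M \<and> (\<forall>X \<in> borel_measurable M. u X = (INF Z\<in>D. EQ M Z X)))"

definition det_set :: "'a measure \<Rightarrow> (('a \<Rightarrow> real) \<Rightarrow> ereal) \<Rightarrow> ('a \<Rightarrow> real) set" where
  "det_set M u = {Z \<in> dens M. \<forall>X \<in> borel_measurable M. u X \<le> EQ M Z X}"

definition L1s :: "'a measure \<Rightarrow> ('a \<Rightarrow> real) set \<Rightarrow> ('a \<Rightarrow> real) set" where
  "L1s M C = {X \<in> borel_measurable M.
     (\<lambda>n::nat. SUP Z\<in>C. EQ M Z (\<lambda>x. \<bar>X x\<bar> * indicator {y. \<bar>X y\<bar> > real n} x)) \<longlonglongrightarrow> 0}"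

definition sigY :: "'a measure \<Rightarrow> ('a \<Rightarrow> 'b::euclidean_space) \<Rightarrow> 'a measure" where
  "sigY M Y = vimage_algebra (space M) Y borel"

definition condE :: "'a measure \<Rightarrow> ('a \<Rightarrow> 'b::euclidean_space) \<Rightarrow> ('a \<Rightarrow> real) \<Rightarrow> ('a \<Rightarrow> real)" where
  "condE M Y X = real_cond_exp M (sigY M Y) X"

definition condD :: "'a measure \<Rightarrow> ('a \<Rightarrow> 'b::euclidean_space) \<Rightarrow> ('a \<Rightarrow> real) set \<Rightarrow> ('a \<Rightarrow> real) set" where
  "condD M Y D = condE M Y ` D"

definition uf :: "'a measure \<Rightarrow> ('a \<Rightarrow> real) set \<Rightarrow> ('a \<Rightarrow> real) \<Rightarrow> ('a \<Rightarrow> 'b::euclidean_space) \<Rightarrow> ereal" where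
  "uf M D X Y = (INF Z\<in>condD M Y D. EQ M Z X)"

definition extreme :: "'a measure \<Rightarrow> ('a \<Rightarrow> real) set \<Rightarrow> ereal \<Rightarrow> ('a \<Rightarrow> real) \<Rightarrow> ('a \<Rightarrow> real) set" where
  "extreme M C v W = {Z \<in> C. EQ M Z W = v \<and> v \<noteq> \<infinity> \<and> v \<noteq> -\<infinity>}"

definition uc :: "'a measure \<Rightarrow> (('a \<Rightarrow> real) \<Rightarrow> ereal) \<Rightarrow> ('a \<Rightarrow> real) \<Rightarrow> ('a \<Rightarrow> real) \<Rightarrow> ereal" where
  "uc M u X W = (INF Z\<in>extreme M (det_set M u) (u W) W. EQ M Z X)"

definition ufc :: "'a measure \<Rightarrow> (('a \<Rightarrow> real) \<Rightarrow> ereal) \<Rightarrow> ('a \<Rightarrow> real) \<Rightarrow> ('a \<Rightarrow> 'b::euclidean_space) \<Rightarrow> ('a \<Rightarrow> real) \<Rightarrow> ereal" where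
  "ufc M u X Y W = (INF Z\<in>extreme M (condD M Y (det_set M u)) (uf M (det_set M u) W Y) W. EQ M Z X)"

end

theory Submission
  imports Defs
begin


lemma EQ_integrable:
  assumes [measurable]: "Z \<in> borel_measurable M" "f \<in> borel_measurable M"
    and pos: "AE x in M. 0 \<le> Z x" and int: "integrable M (\<lambda>x. Z x * f x)"
  shows "EQ M Z f = ereal (\<integral>x. Z x * f x \<partial>M)"
proof -
  have i1: "integrable M (\<lambda>x. Z x * max (f x) 0)"
    by (rule Bochner_Integration.integrable_bound[OF int]) (use pos in \<open>auto elim!: AE_mp intro!: AE_I2 mult_left_mono simp: abs_mult\<close>)
  have i2: "integrable M (\<lambda>x. Z x * max (- f x) 0)"
    by (rule Bochner_Integration.integrable_bound[OF int]) (use pos in \<open>auto elim!: AE_mp intro!: AE_I2 mult_left_mono simp: abs_mult\<close>)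
  have p: "(\<integral>\<^sup>+ x. ennreal (Z x * max (f x) 0) \<partial>M) = ennreal (\<integral>x. Z x * max (f x) 0 \<partial>M)"
    by (rule nn_integral_eq_integral[OF i1]) (use pos in auto)
  have n: "(\<integral>\<^sup>+ x. ennreal (Z x * max (- f x) 0) \<partial>M) = ennreal (\<integral>x. Z x * max (- f x) 0 \<partial>M)"
    by (rule nn_integral_eq_integral[OF i2]) (use pos in auto)
  have a: "0 \<le> (\<integral>x. Z x * max (f x) 0 \<partial>M)" "0 \<le> (\<integral>x. Z x * max (- f x) 0 \<partial>M)"
    by (rule integral_nonneg_AE, use pos in auto)+
  have "(\<integral>x. Z x * f x \<partial>M) = (\<integral>x. Z x * max (f x) 0 - Z x * max (- f x) 0 \<partial>M)"
    by (rule Bochner_Integration.integral_cong) (auto simp: max_def algebra_simps)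
  also have "\<dots> = (\<integral>x. Z x * max (f x) 0 \<partial>M) - (\<integral>x. Z x * max (- f x) 0 \<partial>M)"
    using i1 i2 by simp
  finally show ?thesis unfolding EQ_def Let_def p n using a by simp
qed

lemma EQ_nonneg:
  assumes "\<And>x. 0 \<le> g x"
  shows "EQ M Z g = enn2ereal (\<integral>\<^sup>+ x. ennreal (Z x * g x) \<partial>M)"
proof -
  have m: "max (- g x) 0 = 0" for x using assms[of x] by (simp add: max_def)
  have "(\<lambda>x. ennreal (Z x * max (- g x) 0)) = (\<lambda>x. 0)" unfolding m by simp
  moreover have m2: "max (g x) 0 = g x" for x using assms[of x] by (simp add: max_def)
  ultimately show ?thesis unfolding EQ_def Let_def m2 by (simp add: zero_ennreal.rep_eq)
qed


lemma L1s_integrable: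
  assumes L: "X \<in> L1s M C" and ZC: "Z \<in> C" and [measurable]: "Z \<in> borel_measurable M"
    and pos: "AE x in M. 0 \<le> Z x" and iZ: "integrable M Z"
  shows "integrable M (\<lambda>x. Z x * X x)"
proof -
  have [measurable]: "X \<in> borel_measurable M" using L unfolding L1s_def by auto
  define g where "g n x = \<bar>X x\<bar> * indicator {y. \<bar>X y\<bar> > real n} x" for n :: nat and x
  have lim: "(\<lambda>n::nat. SUP Z\<in>C. EQ M Z (g n)) \<longlonglongrightarrow> 0" using L unfolding L1s_def g_def by auto
  have "eventually (\<lambda>n. (SUP Z\<in>C. EQ M Z (g n)) < 1) sequentially"
    by (rule order_tendstoD(2)[OF lim]) simp
  then obtain N where N: "(SUP Z\<in>C. EQ M Z (g N)) < 1" by (auto simp: eventually_sequentially)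
  have "EQ M Z (g N) < 1" using N SUP_upper[OF ZC, of "\<lambda>Z. EQ M Z (g N)"] by (meson order_le_less_trans)
  moreover have "EQ M Z (g N) = enn2ereal (\<integral>\<^sup>+ x. ennreal (Z x * g N x) \<partial>M)"
    by (rule EQ_nonneg) (simp add: g_def)
  ultimately have fin1: "(\<integral>\<^sup>+ x. ennreal (Z x * g N x) \<partial>M) \<noteq> \<infinity>" by auto
  have "AE x in M. 0 \<le> real N * Z x" using pos by eventually_elim simp
  then have "(\<integral>\<^sup>+ x. ennreal (real N * Z x) \<partial>M) = ennreal (\<integral>x. real N * Z x \<partial>M)"
    by (intro nn_integral_eq_integral integrable_mult_right[OF iZ])
  then have fin2: "(\<integral>\<^sup>+ x. ennreal (real N * Z x) \<partial>M) \<noteq> \<infinity>" by simp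
  have "(\<integral>\<^sup>+ x. ennreal (norm (Z x * X x)) \<partial>M) \<le> (\<integral>\<^sup>+ x. ennreal (Z x * g N x) + ennreal (real N * Z x) \<partial>M)"
  proof (rule nn_integral_mono_AE)
    show "AE x in M. ennreal (norm (Z x * X x)) \<le> ennreal (Z x * g N x) + ennreal (real N * Z x)"
      using pos
    proof eventually_elim
      case (elim x)
      have "norm (Z x * X x) \<le> Z x * g N x + real N * Z x"
      proof (cases "\<bar>X x\<bar> > real N")
        case True then show ?thesis using elim by (simp add: g_def abs_mult)
      next
        case False
        then have "Z x * \<bar>X x\<bar> \<le> Z x * real N" using elim by (intro mult_left_mono) auto
        then show ?thesis using False elim by (simp add: g_def abs_mult mult.commute)
      qed
      moreover have "0 \<le> Z x * g N x" "0 \<le> real N * Z x" using elim by (auto simp: g_def)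
      ultimately show ?case by (simp add: ennreal_plus[symmetric] ennreal_leI del: ennreal_plus)
    qed
  qed
  also have "\<dots> = (\<integral>\<^sup>+ x. ennreal (Z x * g N x) \<partial>M) + (\<integral>\<^sup>+ x. ennreal (real N * Z x) \<partial>M)"
    by (rule nn_integral_add) (auto simp: g_def)
  also have "\<dots> < \<infinity>" using fin1 fin2 by (simp add: less_top)
  finally show ?thesis by (intro integrableI_bounded) auto
qed


lemma (in sigma_finite_subalgebra) key:
  assumes [measurable]: "Z \<in> borel_measurable M" "X \<in> borel_measurable M"
    and pos: "AE x in M. 0 \<le> Z x" and iZ: "integrable M Z"
    and iZX: "integrable M (\<lambda>x. real_cond_exp M F Z x * X x)"
  shows "integrable M (\<lambda>x. Z x * real_cond_exp M F X x)"
    "(\<integral>x. Z x * real_cond_exp M F X x \<partial>M) = (\<integral>x. real_cond_exp M F Z x * X x \<partial>M)"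
proof -
  let ?Z' = "real_cond_exp M F Z"
  let ?nZ = "nn_cond_exp M F (\<lambda>x. ennreal (Z x))"
  let ?nX = "nn_cond_exp M F (\<lambda>x. ennreal \<bar>X x\<bar>)"
  have "AE x in M. nn_cond_exp M F (\<lambda>x. ennreal (- Z x)) x = nn_cond_exp M F (\<lambda>x. 0) x"
  proof (rule nn_cond_exp_cong)
    show "AE x in M. ennreal (- Z x) = 0" using pos by eventually_elim (simp add: ennreal_neg)
  qed auto
  moreover have "AE x in M. 0 = nn_cond_exp M F (\<lambda>x. 0) x"
    by (rule nn_cond_exp_F_meas) auto
  ultimately have neg0: "AE x in M. nn_cond_exp M F (\<lambda>x. ennreal (- Z x)) x = 0" by auto
  have "(\<integral>\<^sup>+ x. 1 * ?nZ x \<partial>M) = (\<integral>\<^sup>+ x. 1 * ennreal (Z x) \<partial>M)"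
    by (rule nn_cond_exp_intg) auto
  also have "\<dots> = ennreal (\<integral>x. Z x \<partial>M)"
    using nn_integral_eq_integral[OF iZ pos] by simp
  finally have "(\<integral>\<^sup>+ x. ?nZ x \<partial>M) \<noteq> \<infinity>" by simp
  then have fin: "AE x in M. ?nZ x \<noteq> \<infinity>" by (intro nn_integral_PInf_AE) auto
  have eqZ: "AE x in M. ?nZ x = ennreal (?Z' x)"
    using neg0 fin by eventually_elim (auto simp: real_cond_exp_def ennreal_enn2real_if)
  have posZ': "AE x in M. 0 \<le> ?Z' x" by (rule real_cond_exp_pos[OF pos]) simp
  have "(\<integral>\<^sup>+ x. ennreal (norm (Z x * real_cond_exp M F X x)) \<partial>M) \<le> (\<integral>\<^sup>+ x. ennreal (Z x) * ?nX x \<partial>M)"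
  proof (rule nn_integral_mono_AE)
    show "AE x in M. ennreal (norm (Z x * real_cond_exp M F X x)) \<le> ennreal (Z x) * ?nX x"
      using real_cond_exp_abs[OF \<open>X \<in> borel_measurable M\<close>] pos
    proof eventually_elim
      case (elim x)
      have "ennreal (norm (Z x * real_cond_exp M F X x)) = ennreal (Z x) * ennreal \<bar>real_cond_exp M F X x\<bar>"
        using elim by (simp add: abs_mult ennreal_mult)
      also have "\<dots> \<le> ennreal (Z x) * ?nX x" using elim by (intro mult_left_mono) auto
      finally show ?case .
    qed
  qed
  also have "\<dots> = (\<integral>\<^sup>+ x. ?nX x * ennreal (Z x) \<partial>M)" by (simp add: mult.commute)
  also have "\<dots> = (\<integral>\<^sup>+ x. ?nX x * ?nZ x \<partial>M)"
    by (rule nn_cond_exp_intg[symmetric]) auto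
  also have "\<dots> = (\<integral>\<^sup>+ x. ?nZ x * ?nX x \<partial>M)" by (simp add: mult.commute)
  also have "\<dots> = (\<integral>\<^sup>+ x. ?nZ x * ennreal \<bar>X x\<bar> \<partial>M)"
    by (rule nn_cond_exp_intg) auto
  also have "\<dots> = (\<integral>\<^sup>+ x. ennreal (norm (?Z' x * X x)) \<partial>M)"
    by (rule nn_integral_cong_AE) (use eqZ posZ' in \<open>eventually_elim, simp add: abs_mult ennreal_mult\<close>)
  also have "\<dots> < \<infinity>" using iZX by (simp add: integrable_iff_bounded)
  finally show int1: "integrable M (\<lambda>x. Z x * real_cond_exp M F X x)"
    by (intro integrableI_bounded) auto
  have int1': "integrable M (\<lambda>x. real_cond_exp M F X x * Z x)"
    using int1 by (simp add: mult.commute)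
  have "(\<integral>x. Z x * real_cond_exp M F X x \<partial>M) = (\<integral>x. real_cond_exp M F X x * Z x \<partial>M)"
    by (simp add: mult.commute)
  also have "\<dots> = (\<integral>x. real_cond_exp M F X x * ?Z' x \<partial>M)"
    by (rule real_cond_exp_intg(2)[OF int1', symmetric]) auto
  also have "\<dots> = (\<integral>x. ?Z' x * real_cond_exp M F X x \<partial>M)"
    by (simp add: mult.commute)
  also have "\<dots> = (\<integral>x. ?Z' x * X x \<partial>M)"
    by (rule real_cond_exp_intg(2)[OF iZX]) auto
  finally show "(\<integral>x. Z x * real_cond_exp M F X x \<partial>M) = (\<integral>x. ?Z' x * X x \<partial>M)" .
qed


lemma sigY_sfs:
  assumes "prob_space M" and [measurable]: "Y \<in> borel_measurable M"
  shows "sigma_finite_subalgebra M (sigY M Y)"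
proof -
  interpret prob_space M by fact
  have "subalgebra M (sigY M Y)"
    unfolding subalgebra_def sigY_def
  proof
    show "space (vimage_algebra (space M) Y borel) = space M" by simp
    have "Y \<in> space M \<rightarrow> space borel" by simp
    then show "sets (vimage_algebra (space M) Y borel) \<subseteq> sets M"
      by (auto simp: sets_vimage_algebra2)
  qed
  then have "finite_measure_subalgebra M (sigY M Y)"
    by (simp add: finite_measure_subalgebra_def finite_measure_subalgebra_axioms_def finite_measure_axioms)
  then show ?thesis by (rule finite_measure_subalgebra_is_sigma_finite)
qed

lemma det_set_INF:
  assumes "coherent_utility M u" and [measurable]: "V \<in> borel_measurable M"
  shows "u V = (INF Z\<in>det_set M u. EQ M Z V)" "det_set M u \<noteq> {}"
proof -
  obtain D where D: "D \<noteq> {}" "D \<subseteq> dens M" "\<And>X. X \<in> borel_measurable M \<Longrightarrow> u X = (INF Z\<in>D. EQ M Z X)"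
    using assms(1) unfolding coherent_utility_def by blast
  have sub: "D \<subseteq> det_set M u"
    using D by (auto simp: det_set_def intro: INF_lower)
  then show "det_set M u \<noteq> {}" using D(1) by auto
  have "(INF Z\<in>det_set M u. EQ M Z V) \<le> (INF Z\<in>D. EQ M Z V)" using sub by (rule INF_superset_mono) simp
  moreover have "u V \<le> (INF Z\<in>det_set M u. EQ M Z V)"
    by (rule INF_greatest) (auto simp: det_set_def)
  ultimately show "u V = (INF Z\<in>det_set M u. EQ M Z V)" using D(3)[OF assms(2)] by simp
qed

theorem theorem6p3:
  fixes M :: "'a measure" and u :: "('a \<Rightarrow> real) \<Rightarrow> ereal"
    and Y :: "'a \<Rightarrow> 'b::euclidean_space" and X W :: "'a \<Rightarrow> real"
  assumes "prob_space M"
    and "coherent_utility M u"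
    and "Y \<in> borel_measurable M"
    and "X \<in> L1s M (det_set M u) \<inter> L1s M (condD M Y (det_set M u))"
    and "W \<in> L1s M (det_set M u) \<inter> L1s M (condD M Y (det_set M u))"
    and "integrable M X" and "integrable M W"
  shows "ufc M u X Y W = uc M u (condE M Y X) (condE M Y W)"
proof -
  define F where "F = sigY M Y"
  interpret sigma_finite_subalgebra M F unfolding F_def by (rule sigY_sfs[OF assms(1,3)])
  let ?D = "det_set M u"
  have cE: "condE M Y f = real_cond_exp M F f" for f unfolding condE_def F_def by simp
  have [measurable]: "X \<in> borel_measurable M" "W \<in> borel_measurable M"
    using assms(6,7) by auto
  have Dprops: "Z \<in> borel_measurable M \<and> (AE x in M. 0 \<le> Z x) \<and> integrable M Z" if "Z \<in> ?D" for Z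
    using that by (auto simp: det_set_def dens_def)
  have trans: "EQ M (condE M Y Z) V = EQ M Z (condE M Y V)"
    if Z: "Z \<in> ?D" and V: "V \<in> L1s M (condD M Y ?D)" "integrable M V" for Z V
  proof -
    have [measurable]: "Z \<in> borel_measurable M" and pos: "AE x in M. 0 \<le> Z x" and iZ: "integrable M Z"
      using Dprops[OF Z] by auto
    have [measurable]: "V \<in> borel_measurable M" using V by auto
    have posZ': "AE x in M. 0 \<le> real_cond_exp M F Z x" by (rule real_cond_exp_pos[OF pos]) simp
    have iZV: "integrable M (\<lambda>x. real_cond_exp M F Z x * V x)"
      by (rule L1s_integrable[OF V(1)]) (use Z posZ' iZ in \<open>auto simp: condD_def cE\<close>)
    have k: "integrable M (\<lambda>x. Z x * real_cond_exp M F V x)"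
      "(\<integral>x. Z x * real_cond_exp M F V x \<partial>M) = (\<integral>x. real_cond_exp M F Z x * V x \<partial>M)"
      using key[OF _ _ pos iZ iZV] by auto
    have "EQ M (condE M Y Z) V = ereal (\<integral>x. real_cond_exp M F Z x * V x \<partial>M)"
      unfolding cE by (rule EQ_integrable[OF _ _ posZ' iZV]) auto
    also have "\<dots> = EQ M Z (condE M Y V)"
      unfolding cE k(2)[symmetric] by (rule EQ_integrable[OF _ _ pos k(1), symmetric]) auto
    finally show ?thesis .
  qed
  have transX: "EQ M (condE M Y Z) X = EQ M Z (condE M Y X)" if "Z \<in> ?D" for Z
    using trans[OF that] assms(4,6) by auto
  have transW: "EQ M (condE M Y Z) W = EQ M Z (condE M Y W)" if "Z \<in> ?D" for Z
    using trans[OF that] assms(5,7) by auto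
  have mW: "condE M Y W \<in> borel_measurable M" unfolding cE by simp
  have ufW: "uf M ?D W Y = u (condE M Y W)"
    unfolding uf_def condD_def image_image det_set_INF(1)[OF assms(2) mW]
    by (rule INF_cong) (auto simp: transW)
  have ext: "extreme M (condD M Y ?D) (uf M ?D W Y) W = condE M Y ` extreme M ?D (u (condE M Y W)) (condE M Y W)"
    unfolding ufW extreme_def condD_def using transW by auto
  show ?thesis
    unfolding ufc_def uc_def ext image_image
    by (rule INF_cong) (auto simp: extreme_def transX)
qed

end
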